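(* In the oligopoly game below, fix $\boldsymbol\sigma\in\{-1,1\}^n$ and let $N_+=\{i:\sigma_i=1\}$, $N_-=\{i:\sigma_i=-1\}$. There exists an equilibrium $(\mathbf A^*,\mathbf q^* )$ with $\mathbf a_i^*=\sigma_i\boldsymbol\beta$ for every $i$ if and only if $$(2+\alpha)-\frac{2+(n+1)\alpha}{2(1+\alpha)}\min_{j\in N_-}\gamma_j\;\le\;\boldsymbol\sigma^\top\boldsymbol\gamma\;\le\;(2+\alpha)+\frac{2+(n+1)\alpha}{2(1+\alpha)}\min_{j\in N_+}\gamma_j,$$ with the convention that the minimum over the empty set is $+\infty$. In such an equilibrium the output profile is uniquely determined as $$\mathbf q^*=\frac{\boldsymbol\gamma}{2+\alpha}-\phi(\boldsymbol\sigma)\,\boldsymbol\sigma,\qquad \phi(\boldsymbol\sigma)=\frac{\alpha(\boldsymbol\sigma^\top\boldsymbol\gamma-(2+\alpha))}{(2+\alpha)(2+(n+1)\alpha)}.$$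
   Context: Model: integers $n\ge2$, $m\ge2$; $\alpha>0$, $\boldsymbol\beta\in\mathbb R^m$ with $\|\boldsymbol\beta\|_2=1$, $\boldsymbol\gamma\in\mathbb R^n$ with all $\gamma_i>0$. Firm $i$ chooses a unit vector $\mathbf a_i\in\mathbb R^m$ and $q_i\ge0$, earning $\Pi_i=\alpha q_i\mathbf a_i^\top(\boldsymbol\beta-\sum_{j\ne i}q_j\mathbf a_j)-(1+\alpha)q_i^2+\gamma_iq_i$. $\mathbf A=[\mathbf a_1,\dots,\mathbf a_n]$. An equilibrium is a profile $(\mathbf A^*,\mathbf q^* )$ in which each $(\mathbf a_i^*,q_i^* )$ maximizes $\Pi_i$ over unit $\mathbf a_i$ and $q_i\ge 0$ given the others' choices. *)

theory Defs
  imports "HOL-Analysis.Analysis" "HOL-Library.Extended_Real"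
begin

text \<open>Firms are indexed by a finite type 'n (n = CARD('n)), product
  characteristics live in real^'m (m = CARD('m)).\<close>

definition profit ::
  "real \<Rightarrow> real^'m \<Rightarrow> ('n::finite \<Rightarrow> real) \<Rightarrow> ('n \<Rightarrow> real^'m) \<Rightarrow> ('n \<Rightarrow> real) \<Rightarrow> 'n \<Rightarrow> real"
  where
  "profit \<alpha> \<beta> \<gamma> A q i =
     \<alpha> * q i * (A i \<bullet> (\<beta> - (\<Sum>j\<in>UNIV - {i}. q j *\<^sub>R A j)))
     - (1 + \<alpha>) * (q i)\<^sup>2 + \<gamma> i * q i"

definition is_equilibrium ::
  "real \<Rightarrow> real^'m \<Rightarrow> ('n::finite \<Rightarrow> real) \<Rightarrow> ('n \<Rightarrow> real^'m) \<Rightarrow> ('n \<Rightarrow> real) \<Rightarrow> bool"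
  where
  "is_equilibrium \<alpha> \<beta> \<gamma> A q \<longleftrightarrow>
     (\<forall>i. norm (A i) = 1 \<and> q i \<ge> 0 \<and>
        (\<forall>a qi. norm a = 1 \<longrightarrow> qi \<ge> 0 \<longrightarrow>
           profit \<alpha> \<beta> \<gamma> (A(i := a)) (q(i := qi)) i \<le> profit \<alpha> \<beta> \<gamma> A q i))"

end

theory Submission
  imports Defs
begin

lemma profit_dev:
  fixes \<beta> :: "real^'m" and \<sigma> q :: "'n::finite \<Rightarrow> real"
  shows "profit \<alpha> \<beta> \<gamma> ((\<lambda>j. \<sigma> j *\<^sub>R \<beta>)(i:=a)) (q(i:=qi)) i
     = \<alpha>*qi*((a \<bullet> \<beta>)*(1 - (\<Sum>j\<in>UNIV-{i}. q j*\<sigma> j))) - (1+\<alpha>)*qi^2 + \<gamma> i*qi"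
proof -
  have "(\<Sum>j\<in>UNIV-{i}. (q(i:=qi)) j *\<^sub>R ((\<lambda>j. \<sigma> j *\<^sub>R \<beta>)(i:=a)) j)
      = (\<Sum>j\<in>UNIV-{i}. (q j*\<sigma> j) *\<^sub>R \<beta>)"
    by (rule sum.cong) auto
  also have "\<dots> = (\<Sum>j\<in>UNIV-{i}. q j*\<sigma> j) *\<^sub>R \<beta>"
    by (simp add: scaleR_sum_left)
  finally have h: "(\<Sum>j\<in>UNIV-{i}. (q(i:=qi)) j *\<^sub>R ((\<lambda>j. \<sigma> j *\<^sub>R \<beta>)(i:=a)) j)
      = (\<Sum>j\<in>UNIV-{i}. q j*\<sigma> j) *\<^sub>R \<beta>" .
  show ?thesis unfolding profit_def h
    by (simp add: inner_diff_right algebra_simps)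
qed

lemma aux2: "(t::real) > 0 \<Longrightarrow> (K/(2*t))*K - t*(K/(2*t))^2 = K^2/(4*t)"
  by (simp add: field_simps power2_eq_square)

lemma one_player:
  fixes \<beta> :: "real^'m" and \<alpha> \<gamma> c s q :: real
  assumes ap: "\<alpha> > 0" and gp: "\<gamma> > 0" and bn: "norm \<beta> = 1" and s: "s = 1 \<or> s = -1"
  shows "(q \<ge> 0 \<and> (\<forall>a::real^'m. \<forall>qi. norm a = 1 \<longrightarrow> qi \<ge> 0 \<longrightarrow>
            \<alpha>*qi*((a \<bullet> \<beta>)*c) - (1+\<alpha>)*qi^2 + \<gamma>*qi \<le> \<alpha>*q*(s*c) - (1+\<alpha>)*q^2 + \<gamma>*q))
         \<longleftrightarrow> (s*c \<ge> 0 \<and> q = (\<alpha>*(s*c)+\<gamma>)/(2*(1+\<alpha>)))"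
proof -
  have bb: "\<beta> \<bullet> \<beta> = 1" using bn by (simp add: dot_square_norm)
  define K where "K = \<alpha>*\<bar>c\<bar> + \<gamma>"
  define k where "k = \<alpha>*(s*c) + \<gamma>"
  have Kp: "K > 0" using ap gp unfolding K_def by (simp add: add_nonneg_pos)
  have sc_le: "s*c \<le> \<bar>c\<bar>" using s by auto
  have kK: "k \<le> K" unfolding k_def K_def using sc_le ap by (simp add: mult_left_mono)
  have bound: "qi*K - (1+\<alpha>)*qi^2 \<le> K^2/(4*(1+\<alpha>))" for qi
  proof -
    have "0 \<le> (2*(1+\<alpha>)*qi - K)^2" by simp
    hence "4*(1+\<alpha>)*(qi*K - (1+\<alpha>)*qi^2) \<le> K^2" by (simp add: power2_eq_square algebra_simps)
    thus ?thesis using ap by (simp add: field_simps)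
  qed
  show ?thesis
  proof
    assume H: "q \<ge> 0 \<and> (\<forall>a::real^'m. \<forall>qi. norm a = 1 \<longrightarrow> qi \<ge> 0 \<longrightarrow>
            \<alpha>*qi*((a \<bullet> \<beta>)*c) - (1+\<alpha>)*qi^2 + \<gamma>*qi \<le> \<alpha>*q*(s*c) - (1+\<alpha>)*q^2 + \<gamma>*q)"
    define a0 where "a0 = (if c \<ge> 0 then \<beta> else -\<beta>)"
    define q0 where "q0 = K/(2*(1+\<alpha>))"
    have a0n: "norm a0 = 1" using bn unfolding a0_def by auto
    have a0c: "(a0 \<bullet> \<beta>)*c = \<bar>c\<bar>" unfolding a0_def using bb by auto
    have q0p: "q0 \<ge> 0" unfolding q0_def using Kp ap by simp
    have "\<alpha>*q0*((a0 \<bullet> \<beta>)*c) - (1+\<alpha>)*q0^2 + \<gamma>*q0 \<le> \<alpha>*q*(s*c) - (1+\<alpha>)*q^2 + \<gamma>*q"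
      using H a0n q0p by blast
    hence h1: "q0*K - (1+\<alpha>)*q0^2 \<le> q*k - (1+\<alpha>)*q^2"
      unfolding a0c K_def k_def by (simp add: algebra_simps)
    have h2: "q0*K - (1+\<alpha>)*q0^2 = K^2/(4*(1+\<alpha>))"
      using aux2[of "1+\<alpha>" K] ap unfolding q0_def by simp
    have qk: "q*k \<le> q*K" using H kK by (simp add: mult_left_mono)
    have h3: "K^2 \<le> 4*(1+\<alpha>)*(q*K - (1+\<alpha>)*q^2)"
    proof -
      have "K^2/(4*(1+\<alpha>)) \<le> q*K - (1+\<alpha>)*q^2" using h1 h2 qk by linarith
      thus ?thesis using ap by (simp add: field_simps)
    qed
    have "(K - 2*(1+\<alpha>)*q)^2 \<le> 0" using h3 by (simp add: power2_eq_square algebra_simps)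
    hence "(K - 2*(1+\<alpha>)*q)^2 = 0" using zero_le_power2[of "K - 2*(1+\<alpha>)*q"] by linarith
    hence Kq: "K = 2*(1+\<alpha>)*q" by simp
    hence qdef: "q = q0" unfolding q0_def using ap by simp
    have "0 < 2*(1+\<alpha>)*q" using Kq Kp by simp
    hence qpos: "q > 0" using ap by (simp add: zero_less_mult_iff)
    have "q*K \<le> q*k" using h1 qdef by simp
    hence "K \<le> k" using qpos by simp
    hence "k = K" using kK by simp
    hence "s*c = \<bar>c\<bar>" unfolding k_def K_def using ap by simp
    thus "s*c \<ge> 0 \<and> q = (\<alpha>*(s*c)+\<gamma>)/(2*(1+\<alpha>))"
      using qdef unfolding q0_def K_def by simp
  next
    assume H: "s*c \<ge> 0 \<and> q = (\<alpha>*(s*c)+\<gamma>)/(2*(1+\<alpha>))"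
    have scabs: "s*c = \<bar>c\<bar>" using H s by auto
    have qK: "q = K/(2*(1+\<alpha>))" using H scabs unfolding K_def by simp
    have qnn: "q \<ge> 0" using qK Kp ap by simp
    have val: "\<alpha>*q*(s*c) - (1+\<alpha>)*q^2 + \<gamma>*q = K^2/(4*(1+\<alpha>))"
    proof -
      have "\<alpha>*q*(s*c) - (1+\<alpha>)*q^2 + \<gamma>*q = q*K - (1+\<alpha>)*q^2"
        unfolding scabs K_def by (simp add: algebra_simps)
      also have "\<dots> = K^2/(4*(1+\<alpha>))" using aux2[of "1+\<alpha>" K] ap unfolding qK by simp
      finally show ?thesis .
    qed
    show "q \<ge> 0 \<and> (\<forall>a::real^'m. \<forall>qi. norm a = 1 \<longrightarrow> qi \<ge> 0 \<longrightarrow>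
            \<alpha>*qi*((a \<bullet> \<beta>)*c) - (1+\<alpha>)*qi^2 + \<gamma>*qi \<le> \<alpha>*q*(s*c) - (1+\<alpha>)*q^2 + \<gamma>*q)"
    proof (intro conjI allI impI qnn)
      fix a :: "real^'m" and qi :: real
      assume an: "norm a = 1" and qi: "qi \<ge> 0"
      have "\<bar>a \<bullet> \<beta>\<bar> \<le> 1" using Cauchy_Schwarz_ineq2[of a \<beta>] an bn by simp
      hence "\<bar>a \<bullet> \<beta>\<bar>*\<bar>c\<bar> \<le> 1*\<bar>c\<bar>" by (rule mult_right_mono) simp
      hence "(a \<bullet> \<beta>)*c \<le> \<bar>c\<bar>" using abs_ge_self[of "(a \<bullet> \<beta>)*c"] by (simp add: abs_mult)
      hence "\<alpha>*qi*((a \<bullet> \<beta>)*c) \<le> \<alpha>*qi*\<bar>c\<bar>" using ap qi by (simp add: mult_left_mono)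
      hence "\<alpha>*qi*((a \<bullet> \<beta>)*c) - (1+\<alpha>)*qi^2 + \<gamma>*qi \<le> qi*K - (1+\<alpha>)*qi^2"
        unfolding K_def by (simp add: algebra_simps)
      also have "\<dots> \<le> K^2/(4*(1+\<alpha>))" by (rule bound)
      finally show "\<alpha>*qi*((a \<bullet> \<beta>)*c) - (1+\<alpha>)*qi^2 + \<gamma>*qi \<le> \<alpha>*q*(s*c) - (1+\<alpha>)*q^2 + \<gamma>*q"
        using val by simp
    qed
  qed
qed


lemma alg1: "(a::real) > 0 \<Longrightarrow> D = 2+(n+1)*a \<Longrightarrow> D > 0 \<Longrightarrow> G/(2+a) - a*(G-(2+a))/((2+a)*D) * n = (G+n*a)/D"
proof -
  assume a: "a > 0" and Dd: "D = 2+(n+1)*a" and D: "D > 0"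
  have d1: "2+a \<noteq> 0" using a by simp
  have d2: "D \<noteq> 0" using D by simp
  have "G/(2+a) - a*(G-(2+a))/((2+a)*D) * n = (G*D - a*(G-(2+a))*n)/((2+a)*D)"
  proof -
    have e1: "G/(2+a) = (G*D)/((2+a)*D)" using d2 by simp
    have e2: "a*(G-(2+a))/((2+a)*D)*n = (a*(G-(2+a))*n)/((2+a)*D)" by simp
    show ?thesis unfolding e1 e2 diff_divide_distrib ..
  qed
  also have "G*D - a*(G-(2+a))*n = (G+n*a)*(2+a)" unfolding Dd by (simp add: algebra_simps)
  also have "(G+n*a)*(2+a)/((2+a)*D) = (G+n*a)/D" using d1 by simp
  finally show ?thesis .
qed
lemma ereal_upper:
  assumes "finite J" "(k::real) > 0"
  shows "(ereal x \<le> ereal c + ereal k * (INF j\<in>J. ereal (g j))) \<longleftrightarrow> (\<forall>j\<in>J. x \<le> c + k*g j)"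
proof (cases "J = {}")
  case True thus ?thesis using assms by (simp add: top_ereal_def)
next
  case False
  define m where "m = Min (g ` J)"
  have mi: "m \<in> g ` J" unfolding m_def using assms False by simp
  have ml: "\<And>j. j \<in> J \<Longrightarrow> m \<le> g j" unfolding m_def using assms by simp
  have "(INF j\<in>J. ereal (g j)) = ereal m"
    by (rule antisym) (use mi ml in \<open>auto intro: INF_lower2 INF_greatest\<close>)
  moreover have "(x \<le> c + k*m) \<longleftrightarrow> (\<forall>j\<in>J. x \<le> c + k*g j)"
  proof -
    have mono: "\<And>j. j\<in>J \<Longrightarrow> k*m \<le> k*g j" using ml assms(2) by (simp add: mult_left_mono)
    show ?thesis using mi mono by fastforce
  qed
  ultimately show ?thesis by simp
qed
lemma ereal_lower:
  assumes "finite J" "(k::real) > 0"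
  shows "(ereal c - ereal k * (INF j\<in>J. ereal (g j)) \<le> ereal x) \<longleftrightarrow> (\<forall>j\<in>J. c - k*g j \<le> x)"
proof (cases "J = {}")
  case True thus ?thesis using assms by (simp add: top_ereal_def)
next
  case False
  define m where "m = Min (g ` J)"
  have mi: "m \<in> g ` J" unfolding m_def using assms False by simp
  have ml: "\<And>j. j \<in> J \<Longrightarrow> m \<le> g j" unfolding m_def using assms by simp
  have "(INF j\<in>J. ereal (g j)) = ereal m"
    by (rule antisym) (use mi ml in \<open>auto intro: INF_lower2 INF_greatest\<close>)
  moreover have "(c - k*m \<le> x) \<longleftrightarrow> (\<forall>j\<in>J. c - k*g j \<le> x)"
  proof -
    have mono: "\<And>j. j\<in>J \<Longrightarrow> k*m \<le> k*g j" using ml assms(2) by (simp add: mult_left_mono)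
    show ?thesis using mi mono by fastforce
  qed
  ultimately show ?thesis by simp
qed

lemma alg2: "(D::real) \<noteq> 0 \<Longrightarrow> x = g - a*(G-b)/D*t \<Longrightarrow> x = a*t*((b-G)/D) + g"
  by (simp add: field_simps)
lemma alg3: "(D::real) \<noteq> 0 \<Longrightarrow> b = 2+a \<Longrightarrow> b*y = g - a*(G-b)/D*t \<Longrightarrow> b*(t*((b-G)/D) + y) = 2*(1+a)*t*(b-G)/D + g"
  by (simp add: field_simps)

lemma alg4: "(D::real) \<noteq> 0 \<Longrightarrow> c \<noteq> 0 \<Longrightarrow> c*t*x/D + g = (t*x + D/c*g)/(D/c)"
  by (simp add: field_simps)

lemma eq_char:
  fixes \<beta> :: "real^'m" and \<sigma> q \<gamma> :: "'n::finite \<Rightarrow> real"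
  assumes ap: "\<alpha> > 0" and bn: "norm \<beta> = 1" and gp: "\<forall>i. \<gamma> i > 0"
    and sp: "\<forall>i. \<sigma> i \<in> {-1, 1}"
  shows "is_equilibrium \<alpha> \<beta> \<gamma> (\<lambda>i. \<sigma> i *\<^sub>R \<beta>) q \<longleftrightarrow>
    (\<forall>i. 0 \<le> \<sigma> i * (1 - (\<Sum>j\<in>UNIV-{i}. q j*\<sigma> j)) \<and>
         q i = (\<alpha>*(\<sigma> i * (1 - (\<Sum>j\<in>UNIV-{i}. q j*\<sigma> j))) + \<gamma> i)/(2*(1+\<alpha>)))"
proof -
  have bb: "\<beta> \<bullet> \<beta> = 1" using bn by (simp add: dot_square_norm)
  have per: "(norm (\<sigma> i *\<^sub>R \<beta>) = 1 \<and> q i \<ge> 0 \<and>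
        (\<forall>a qi. norm a = 1 \<longrightarrow> qi \<ge> 0 \<longrightarrow>
           profit \<alpha> \<beta> \<gamma> ((\<lambda>i. \<sigma> i *\<^sub>R \<beta>)(i := a)) (q(i := qi)) i \<le> profit \<alpha> \<beta> \<gamma> (\<lambda>i. \<sigma> i *\<^sub>R \<beta>) q i))
     \<longleftrightarrow> (0 \<le> \<sigma> i * (1 - (\<Sum>j\<in>UNIV-{i}. q j*\<sigma> j)) \<and>
         q i = (\<alpha>*(\<sigma> i * (1 - (\<Sum>j\<in>UNIV-{i}. q j*\<sigma> j))) + \<gamma> i)/(2*(1+\<alpha>)))" for i
  proof -
    define c where "c = 1 - (\<Sum>j\<in>UNIV-{i}. q j*\<sigma> j)"
    have s: "\<sigma> i = 1 \<or> \<sigma> i = -1" using sp by auto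
    have nrm: "norm (\<sigma> i *\<^sub>R \<beta>) = 1" using s bn by auto
    have own: "profit \<alpha> \<beta> \<gamma> (\<lambda>i. \<sigma> i *\<^sub>R \<beta>) q i = \<alpha>*q i*(\<sigma> i*c) - (1+\<alpha>)*(q i)^2 + \<gamma> i*q i"
    proof -
      have f1: "(\<lambda>j. \<sigma> j *\<^sub>R \<beta>)(i := \<sigma> i *\<^sub>R \<beta>) = (\<lambda>j. \<sigma> j *\<^sub>R \<beta>)" by auto
      have f2: "q(i := q i) = q" by auto
      show ?thesis
        using profit_dev[of \<alpha> \<beta> \<gamma> \<sigma> i "\<sigma> i *\<^sub>R \<beta>" q "q i"] bb unfolding c_def f1 f2 by simp
    qed
    have dev: "\<And>a qi. profit \<alpha> \<beta> \<gamma> ((\<lambda>i. \<sigma> i *\<^sub>R \<beta>)(i := a)) (q(i := qi)) i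
        = \<alpha>*qi*((a \<bullet> \<beta>)*c) - (1+\<alpha>)*qi^2 + \<gamma> i*qi"
      unfolding c_def by (rule profit_dev)
    show ?thesis unfolding own dev c_def[symmetric]
      using one_player[OF ap spec[OF gp, of i] bn s, of "q i" c] nrm by simp
  qed
  show ?thesis unfolding is_equilibrium_def per by (rule refl)
qed

theorem proposition4:
  fixes \<alpha> :: real and \<beta> :: "real^'m::finite" and \<gamma> :: "'n::finite \<Rightarrow> real"
    and \<sigma> :: "'n \<Rightarrow> real"
  assumes n2: "CARD('n) \<ge> 2" and m2: "CARD('m) \<ge> 2"
    and alpha_pos: "\<alpha> > 0" and beta_unit: "norm \<beta> = 1"
    and gamma_pos: "\<forall>i. \<gamma> i > 0"
    and sigma_pm: "\<forall>i. \<sigma> i \<in> {-1, 1}"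
  shows "((\<exists>q. is_equilibrium \<alpha> \<beta> \<gamma> (\<lambda>i. \<sigma> i *\<^sub>R \<beta>) q) \<longleftrightarrow>
          ereal (2 + \<alpha>) - ereal ((2 + (real CARD('n) + 1) * \<alpha>) / (2 * (1 + \<alpha>)))
              * (INF j\<in>{j. \<sigma> j = -1}. ereal (\<gamma> j))
            \<le> ereal (\<Sum>i\<in>UNIV. \<sigma> i * \<gamma> i) \<and>
          ereal (\<Sum>i\<in>UNIV. \<sigma> i * \<gamma> i)
            \<le> ereal (2 + \<alpha>) + ereal ((2 + (real CARD('n) + 1) * \<alpha>) / (2 * (1 + \<alpha>)))
              * (INF j\<in>{j. \<sigma> j = 1}. ereal (\<gamma> j)))
       \<and> (\<forall>q. is_equilibrium \<alpha> \<beta> \<gamma> (\<lambda>i. \<sigma> i *\<^sub>R \<beta>) q \<longrightarrow>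
            q = (\<lambda>i. \<gamma> i / (2 + \<alpha>)
                 - (\<alpha> * ((\<Sum>k\<in>UNIV. \<sigma> k * \<gamma> k) - (2 + \<alpha>))
                    / ((2 + \<alpha>) * (2 + (real CARD('n) + 1) * \<alpha>))) * \<sigma> i))"
proof -
  define n where "n = real CARD('n)"
  define G where "G = (\<Sum>k\<in>UNIV. \<sigma> k * \<gamma> k)"
  define D where "D = 2 + (n + 1) * \<alpha>"
  define \<phi> where "\<phi> = \<alpha> * (G - (2 + \<alpha>)) / ((2 + \<alpha>) * D)"
  define qs where "qs = (\<lambda>i. \<gamma> i / (2 + \<alpha>) - \<phi> * \<sigma> i)"
  define \<kappa> where "\<kappa> = D / (2 * (1 + \<alpha>))"
  define S where "S = (\<lambda>q::'n \<Rightarrow> real. \<Sum>j\<in>UNIV. \<sigma> j * q j)"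
  have np: "n \<ge> 0" unfolding n_def by simp
  have Dp: "D > 0" unfolding D_def using alpha_pos np by (simp add: add_pos_nonneg)
  have kp: "\<kappa> > 0" unfolding \<kappa>_def using Dp alpha_pos by simp
  have sq: "\<sigma> i * \<sigma> i = 1" for i
  proof -
    have "\<sigma> i = -1 \<or> \<sigma> i = 1" using sigma_pm by blast
    thus ?thesis by auto
  qed
  have sumsq: "(\<Sum>i\<in>UNIV. \<sigma> i * \<sigma> i) = n" by (simp add: sq n_def)
  have rem: "\<And>q i. (\<Sum>j\<in>UNIV-{i}. q j*\<sigma> j) = S q - \<sigma> i * q i"
  proof -
    fix q :: "'n \<Rightarrow> real" and i
    have e: "(\<Sum>j\<in>UNIV. q j*\<sigma> j) = q i * \<sigma> i + (\<Sum>j\<in>UNIV-{i}. q j*\<sigma> j)"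
      by (rule sum.remove) simp_all
    have "S q = (\<Sum>j\<in>UNIV. q j*\<sigma> j)" unfolding S_def by (simp add: mult.commute)
    thus "(\<Sum>j\<in>UNIV-{i}. q j*\<sigma> j) = S q - \<sigma> i * q i" using e by (simp add: mult.commute)
  qed
  have cs: "\<And>q i. \<sigma> i * (1 - (\<Sum>j\<in>UNIV-{i}. q j*\<sigma> j)) = \<sigma> i * (1 - S q) + q i"
  proof -
    fix q :: "'n \<Rightarrow> real" and i
    have "\<sigma> i * (1 - (S q - \<sigma> i * q i)) = \<sigma> i * (1 - S q) + (\<sigma> i * \<sigma> i) * q i"
      by (simp add: algebra_simps)
    thus "\<sigma> i * (1 - (\<Sum>j\<in>UNIV-{i}. q j*\<sigma> j)) = \<sigma> i * (1 - S q) + q i" unfolding rem sq by simp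
  qed
  have Sqs: "S qs = (G + n*\<alpha>)/D"
  proof -
    have "S qs = (\<Sum>j\<in>UNIV. \<sigma> j * \<gamma> j / (2+\<alpha>) - \<phi> * (\<sigma> j * \<sigma> j))"
      unfolding S_def qs_def by (simp add: algebra_simps)
    also have "\<dots> = G/(2+\<alpha>) - \<phi> * n"
      unfolding sum_subtractf G_def sumsq[symmetric] by (simp add: sum_divide_distrib sum_distrib_left)
    also have "\<dots> = (G + n*\<alpha>)/D" unfolding \<phi>_def using alg1[OF alpha_pos D_def Dp] by simp
    finally show ?thesis .
  qed
  have oneS: "1 - S qs = (2 + \<alpha> - G)/D"
    unfolding Sqs using Dp by (simp add: field_simps D_def)
  define P where "P = (\<lambda>i. 0 \<le> \<sigma> i * (1 - S qs) + qs i)"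
  have key: "(\<forall>i. 0 \<le> \<sigma> i * (1 - S q) + q i \<and> q i = (\<alpha>*(\<sigma> i * (1 - S q) + q i) + \<gamma> i)/(2*(1+\<alpha>)))
      \<longleftrightarrow> (q = qs \<and> (\<forall>i. P i))" for q
  proof
    assume H: "\<forall>i. 0 \<le> \<sigma> i * (1 - S q) + q i \<and> q i = (\<alpha>*(\<sigma> i * (1 - S q) + q i) + \<gamma> i)/(2*(1+\<alpha>))"
    have E: "(2+\<alpha>) * q i = \<alpha> * \<sigma> i * (1 - S q) + \<gamma> i" for i
    proof -
      have "q i * (2*(1+\<alpha>)) = \<alpha>*(\<sigma> i * (1 - S q) + q i) + \<gamma> i"
        using H alpha_pos by (simp add: field_simps)
      thus ?thesis by (simp add: algebra_simps)
    qed
    have "(2+\<alpha>) * S q = (\<Sum>i\<in>UNIV. \<sigma> i * ((2+\<alpha>) * q i))"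
      unfolding S_def by (simp add: sum_distrib_left algebra_simps)
    also have "\<dots> = (\<Sum>i\<in>UNIV. \<alpha> * (1 - S q) * (\<sigma> i * \<sigma> i) + \<sigma> i * \<gamma> i)"
      unfolding E by (simp add: algebra_simps)
    also have "\<dots> = \<alpha> * (1 - S q) * n + G"
      unfolding sum.distrib G_def sumsq[symmetric] by (simp add: sum_distrib_left)
    finally have "(2+\<alpha>) * S q = \<alpha> * (1 - S q) * n + G" .
    hence "S q * D = G + n*\<alpha>" unfolding D_def by (simp add: algebra_simps)
    hence SqS: "S q = S qs" unfolding Sqs using Dp by (simp add: field_simps)
    have "q i = qs i" for i
    proof -
      have "(2+\<alpha>) * q i = (2+\<alpha>) * qs i"
      proof -
        have "(2+\<alpha>) * qs i = \<alpha> * \<sigma> i * (1 - S qs) + \<gamma> i"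
        proof -
          have "(2+\<alpha>) * qs i = \<gamma> i - (2+\<alpha>) * \<phi> * \<sigma> i" unfolding qs_def using alpha_pos by (simp add: field_simps)
          also have "(2+\<alpha>) * \<phi> = \<alpha> * (G - (2+\<alpha>)) / D" unfolding \<phi>_def using alpha_pos by simp
          finally show ?thesis unfolding oneS using alg2[of D] Dp by simp
        qed
        thus ?thesis using E[of i] SqS by simp
      qed
      thus ?thesis using alpha_pos by simp
    qed
    hence qq: "q = qs" by auto
    show "q = qs \<and> (\<forall>i. P i)" using H qq unfolding P_def by simp
  next
    assume H: "q = qs \<and> (\<forall>i. P i)"
    hence qq: "q = qs" by simp
    have "qs i = (\<alpha>*(\<sigma> i * (1 - S qs) + qs i) + \<gamma> i)/(2*(1+\<alpha>))" for i
    proof -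
      have "(2+\<alpha>) * qs i = \<gamma> i - (2+\<alpha>) * \<phi> * \<sigma> i" unfolding qs_def using alpha_pos by (simp add: field_simps)
      also have "(2+\<alpha>) * \<phi> = \<alpha> * (G - (2+\<alpha>)) / D" unfolding \<phi>_def using alpha_pos by simp
      finally have "(2+\<alpha>) * qs i = \<alpha> * \<sigma> i * (1 - S qs) + \<gamma> i" unfolding oneS using alg2[of D] Dp by simp
      hence "qs i * (2*(1+\<alpha>)) = \<alpha>*(\<sigma> i * (1 - S qs) + qs i) + \<gamma> i" by (simp add: algebra_simps)
      thus ?thesis using alpha_pos by (simp add: field_simps)
    qed
    thus "\<forall>i. 0 \<le> \<sigma> i * (1 - S q) + q i \<and> q i = (\<alpha>*(\<sigma> i * (1 - S q) + q i) + \<gamma> i)/(2*(1+\<alpha>))"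
      using H unfolding P_def by simp
  qed
  have char: "is_equilibrium \<alpha> \<beta> \<gamma> (\<lambda>i. \<sigma> i *\<^sub>R \<beta>) q \<longleftrightarrow> (q = qs \<and> (\<forall>i. P i))" for q
    unfolding eq_char[OF alpha_pos beta_unit gamma_pos sigma_pm] cs key ..
  have Pi: "P i \<longleftrightarrow> (if \<sigma> i = 1 then G \<le> (2+\<alpha>) + \<kappa> * \<gamma> i else (2+\<alpha>) - \<kappa> * \<gamma> i \<le> G)" for i
  proof -
    have "(2+\<alpha>) * (\<sigma> i * (1 - S qs) + qs i) = (2*(1+\<alpha>)*\<sigma> i*(2+\<alpha>-G)/D + \<gamma> i)"
    proof -
      have "(2+\<alpha>) * qs i = \<gamma> i - (2+\<alpha>) * \<phi> * \<sigma> i" unfolding qs_def using alpha_pos by (simp add: field_simps)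
      also have "(2+\<alpha>) * \<phi> = \<alpha> * (G - (2+\<alpha>)) / D" unfolding \<phi>_def using alpha_pos by simp
      finally have "(2+\<alpha>) * qs i = \<gamma> i - \<alpha> * (G - (2+\<alpha>)) / D * \<sigma> i" .
      thus ?thesis unfolding oneS using alg3[of D "2+\<alpha>" \<alpha>] Dp by simp
    qed
    moreover have "P i \<longleftrightarrow> 0 \<le> (2+\<alpha>) * (\<sigma> i * (1 - S qs) + qs i)"
      unfolding P_def using alpha_pos by (simp add: zero_le_mult_iff)
    ultimately have "P i \<longleftrightarrow> 0 \<le> 2*(1+\<alpha>)*\<sigma> i*(2+\<alpha>-G)/D + \<gamma> i" by simp
    also have "\<dots> \<longleftrightarrow> 0 \<le> \<sigma> i*(2+\<alpha>-G) + \<kappa> * \<gamma> i"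
    proof -
      have "2*(1+\<alpha>)*\<sigma> i*(2+\<alpha>-G)/D + \<gamma> i = (\<sigma> i*(2+\<alpha>-G) + \<kappa> * \<gamma> i) / \<kappa>"
        unfolding \<kappa>_def using alg4[of D "2*(1+\<alpha>)" "\<sigma> i" "2+\<alpha>-G" "\<gamma> i"] Dp alpha_pos by simp
      thus ?thesis using kp by (simp add: zero_le_divide_iff)
    qed
    moreover have "\<sigma> i = -1 \<or> \<sigma> i = 1" using sigma_pm by blast
    ultimately show ?thesis by (cases "\<sigma> i = 1") auto
  qed
  have kdef: "(2 + (real CARD('n) + 1) * \<alpha>) / (2 * (1 + \<alpha>)) = \<kappa>" unfolding \<kappa>_def D_def n_def ..
  have allP: "(\<forall>i. P i) \<longleftrightarrow> (\<forall>j\<in>{j. \<sigma> j = -1}. (2+\<alpha>) - \<kappa> * \<gamma> j \<le> G) \<and> (\<forall>j\<in>{j. \<sigma> j = 1}. G \<le> (2+\<alpha>) + \<kappa> * \<gamma> j)"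
    unfolding Pi using sigma_pm by force
  have ex: "(\<exists>q. is_equilibrium \<alpha> \<beta> \<gamma> (\<lambda>i. \<sigma> i *\<^sub>R \<beta>) q) \<longleftrightarrow> (\<forall>i. P i)"
    unfolding char by auto
  show ?thesis
    unfolding kdef G_def[symmetric] ex allP
    unfolding ereal_lower[OF finite kp] ereal_upper[OF finite kp]
    using char unfolding qs_def \<phi>_def D_def n_def G_def by blast
qed

end
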